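(* Let $k\ge 4$ be even and let $G=(V,E)$ be a $k$-uniform hyperstar of size $d\ge 2$, with $V=[n]$, $E=\{e_1,\ldots,e_d\}$, and heart the vertex $1$. Let $\mathcal L$ be its Laplacian tensor and, for $r=0,1,\ldots,d$, let $f_r(\lambda)=(\lambda-d)(1-\lambda)^{k-1}+r$. Then: (i) A real number $\lambda\neq 1$ is an H-eigenvalue of $\mathcal L$ if and only if it is a real root of $f_r$ for some $r\in\{0,1,\ldots,d\}$. (ii) If $\lambda\neq1$ is a real root of $f_r$, then, up to a nonzero constant multiple, the H-eigenvectors of $\mathcal L$ corresponding to $\lambda$ are exactly the vectors $\mathbf x$ obtained as follows: take $x_1=1-\lambda$; choose any $r$ edges of $G$ and assign to the vertices other than $1$ of these $r$ edges values $\pm1$ such that in each chosen edge the number of vertices assigned $-1$ is even; set $x_j=0$ for all other vertices $j$.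
   Context: A $k$-uniform hyperstar of size $d$ is a hypergraph whose vertex set is a disjoint union $V=V_0\cup V_1\cup\cdots\cup V_d$ with $|V_0|=1$, $|V_1|=\cdots=|V_d|=k-1$, and edge set $\{V_0\cup V_i: i\in[d]\}$; the vertex in $V_0$ is the heart. For a $k$-uniform hypergraph with $d_i$ the number of edges containing $i$, the Laplacian tensor $\mathcal L=\mathcal D-\mathcal A$ ($\mathcal D$ diagonal with entries $d_i$, $\mathcal A$ with entries $\frac1{(k-1)!}$ at index tuples forming an edge and $0$ otherwise) satisfies $(\mathcal L\mathbf x^{k-1})_i=d_ix_i^{k-1}-\sum_{e\in E,\,i\in e}\prod_{s\in e\setminus\{i\}}x_s$. A real $\lambda$ is an H-eigenvalue of $\mathcal L$ with H-eigenvector $\mathbf x\in\mathbb R^n\setminus\{0\}$ if $(\mathcal L\mathbf x^{k-1})_i=\lambda x_i^{k-1}$ for all $i\in[n]$. *)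

theory Defs
  imports Main Complex_Main
begin

definition hyperstar :: "nat \<Rightarrow> nat \<Rightarrow> nat \<Rightarrow> nat set set \<Rightarrow> bool" where
  "hyperstar k d n E \<longleftrightarrow>
     finite E \<and> card E = d \<and>
     (\<forall>e\<in>E. e \<subseteq> {1..n} \<and> card e = k \<and> 1 \<in> e) \<and>
     (\<forall>e\<in>E. \<forall>e'\<in>E. e \<noteq> e' \<longrightarrow> e \<inter> e' = {1}) \<and>
     \<Union>E = {1..n}"

definition hdeg :: "nat set set \<Rightarrow> nat \<Rightarrow> nat" where
  "hdeg E i = card {e\<in>E. i \<in> e}"

text \<open>(L x^{k-1})_i = d_i x_i^{k-1} - sum over edges e containing i of prod_{s in e - {i}} x_s.\<close>
definition laplacian_apply :: "nat \<Rightarrow> nat set set \<Rightarrow> (nat \<Rightarrow> real) \<Rightarrow> nat \<Rightarrow> real" where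
  "laplacian_apply k E x i =
     real (hdeg E i) * x i ^ (k - 1) - (\<Sum>e\<in>{e\<in>E. i \<in> e}. \<Prod>s\<in>e - {i}. x s)"

text \<open>H-eigenvector (vectors in R^n are functions nat => real; only values on {1..n} matter).\<close>
definition H_eigenvector :: "nat \<Rightarrow> nat \<Rightarrow> nat set set \<Rightarrow> real \<Rightarrow> (nat \<Rightarrow> real) \<Rightarrow> bool" where
  "H_eigenvector k n E \<mu> x \<longleftrightarrow>
     (\<exists>i\<in>{1..n}. x i \<noteq> 0) \<and>
     (\<forall>i\<in>{1..n}. laplacian_apply k E x i = \<mu> * x i ^ (k - 1))"

definition H_eigenvalue :: "nat \<Rightarrow> nat \<Rightarrow> nat set set \<Rightarrow> real \<Rightarrow> bool" where
  "H_eigenvalue k n E \<mu> \<longleftrightarrow> (\<exists>x. H_eigenvector k n E \<mu> x)"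

definition f_poly :: "nat \<Rightarrow> nat \<Rightarrow> nat \<Rightarrow> real \<Rightarrow> real" where
  "f_poly k d r \<mu> = (\<mu> - real d) * (1 - \<mu>) ^ (k - 1) + real r"

definition star_vector :: "nat \<Rightarrow> nat set set \<Rightarrow> nat \<Rightarrow> real \<Rightarrow> (nat \<Rightarrow> real) \<Rightarrow> bool" where
  "star_vector n E r \<mu> y \<longleftrightarrow>
     y 1 = 1 - \<mu> \<and>
     (\<exists>S\<subseteq>E. card S = r \<and>
        (\<forall>j\<in>\<Union>S - {1}. y j = 1 \<or> y j = -1) \<and>
        (\<forall>e\<in>S. even (card {j\<in>e - {1}. y j = -1})) \<and>
        (\<forall>j\<in>{1..n} - \<Union>S. j \<noteq> 1 \<longrightarrow> y j = 0))"

end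

theory Submission
  imports Defs
begin

lemma pow_eq1_real:
  fixes y :: real
  assumes "y ^ k = 1" "k > 0"
  shows "y = 1 \<or> y = -1"
proof -
  have "norm y = 1" using power_eq_1_iff[OF assms(1)] assms(2) by auto
  then show ?thesis by (auto simp: abs_if split: if_splits)
qed

lemma prod_pm1:
  fixes y :: "nat \<Rightarrow> real"
  assumes "finite A" "\<forall>j\<in>A. y j = 1 \<or> y j = -1"
  shows "prod y A = (-1) ^ card {j\<in>A. y j = -1}"
proof -
  have "prod y A = prod y (A \<inter> {j. y j = -1}) * prod y (A - {j. y j = -1})"
    using prod.Int_Diff[OF assms(1)] by blast
  also have "prod y (A \<inter> {j. y j = -1}) = prod (\<lambda>_. -1) (A \<inter> {j. y j = -1})"
    by (rule prod.cong) auto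
  also have "prod y (A - {j. y j = -1}) = prod (\<lambda>_. 1) (A - {j. y j = -1})"
    by (rule prod.cong) (use assms(2) in auto)
  also have "A \<inter> {j. y j = -1} = {j\<in>A. y j = -1}" by auto
  finally show ?thesis by simp
qed

locale hs =
  fixes k d n :: nat and E :: "nat set set"
  assumes ev: "even k" and k4: "k \<ge> 4" and d2: "d \<ge> 2"
    and H: "hyperstar k d n E"
begin

lemma finE: "finite E" and cardE: "card E = d"
  and edge: "e \<in> E \<Longrightarrow> e \<subseteq> {1..n} \<and> card e = k \<and> 1 \<in> e"
  and disj: "e \<in> E \<Longrightarrow> e' \<in> E \<Longrightarrow> e \<noteq> e' \<Longrightarrow> e \<inter> e' = {1}"
  and cover: "\<Union>E = {1..n}"
  using H unfolding hyperstar_def by blast+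

lemma fin_e: "e \<in> E \<Longrightarrow> finite e"
  using edge finite_subset by blast

lemma card_A: "e \<in> E \<Longrightarrow> card (e - {1}) = k - 1"
  using edge fin_e by (simp add: card_Diff_singleton)

lemma one_in: "1 \<in> {1..n}"
proof -
  have "E \<noteq> {}" using cardE d2 by auto
  then obtain e where "e \<in> E" by auto
  then show ?thesis using edge[of e] by blast
qed

lemma uniq: "j \<noteq> 1 \<Longrightarrow> j \<in> e \<Longrightarrow> e \<in> E \<Longrightarrow> {e'\<in>E. j \<in> e'} = {e}"
  using disj by blast

lemma lap1: "laplacian_apply k E x 1 = real d * x 1 ^ (k - 1) - (\<Sum>e\<in>E. \<Prod>s\<in>e - {1}. x s)"
proof -
  have "{e\<in>E. 1 \<in> e} = E" using edge by auto
  then show ?thesis unfolding laplacian_apply_def hdeg_def using cardE by simp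
qed

lemma lapj:
  assumes "j \<noteq> 1" "j \<in> e" "e \<in> E"
  shows "laplacian_apply k E x j = x j ^ (k - 1) - x 1 * (\<Prod>s\<in>e - {1} - {j}. x s)"
proof -
  have "e - {j} = insert 1 (e - {1} - {j})" using assms edge by auto
  then have "(\<Prod>s\<in>e - {j}. x s) = x 1 * (\<Prod>s\<in>e - {1} - {j}. x s)"
    using fin_e[OF assms(3)] by simp
  then show ?thesis unfolding laplacian_apply_def hdeg_def uniq[OF assms] by simp
qed

definition eqs :: "(nat \<Rightarrow> real) \<Rightarrow> real \<Rightarrow> bool" where
  "eqs x \<mu> \<longleftrightarrow> (\<forall>i\<in>{1..n}. laplacian_apply k E x i = \<mu> * x i ^ (k - 1))"

lemma eqs_iff:
  "eqs x \<mu> \<longleftrightarrow> (real d * x 1 ^ (k - 1) - (\<Sum>e\<in>E. \<Prod>s\<in>e - {1}. x s) = \<mu> * x 1 ^ (k - 1)) \<and>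
     (\<forall>e\<in>E. \<forall>j\<in>e-{1}. x j ^ (k - 1) - x 1 * (\<Prod>s\<in>e - {1} - {j}. x s) = \<mu> * x j ^ (k - 1))"
proof
  assume a: "eqs x \<mu>"
  show "(real d * x 1 ^ (k - 1) - (\<Sum>e\<in>E. \<Prod>s\<in>e - {1}. x s) = \<mu> * x 1 ^ (k - 1)) \<and>
     (\<forall>e\<in>E. \<forall>j\<in>e-{1}. x j ^ (k - 1) - x 1 * (\<Prod>s\<in>e - {1} - {j}. x s) = \<mu> * x j ^ (k - 1))"
  proof
    show "real d * x 1 ^ (k - 1) - (\<Sum>e\<in>E. \<Prod>s\<in>e - {1}. x s) = \<mu> * x 1 ^ (k - 1)"
      using a one_in lap1 unfolding eqs_def by metis
    show "\<forall>e\<in>E. \<forall>j\<in>e-{1}. x j ^ (k - 1) - x 1 * (\<Prod>s\<in>e - {1} - {j}. x s) = \<mu> * x j ^ (k - 1)"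
    proof (intro ballI)
      fix e j assume "e \<in> E" "j \<in> e - {1}"
      then have "j \<in> {1..n}" using edge[of e] by blast
      then show "x j ^ (k - 1) - x 1 * (\<Prod>s\<in>e - {1} - {j}. x s) = \<mu> * x j ^ (k - 1)"
        using a lapj[of j e x] \<open>e \<in> E\<close> \<open>j \<in> e - {1}\<close> unfolding eqs_def by auto
    qed
  qed
next
  assume a: "(real d * x 1 ^ (k - 1) - (\<Sum>e\<in>E. \<Prod>s\<in>e - {1}. x s) = \<mu> * x 1 ^ (k - 1)) \<and>
     (\<forall>e\<in>E. \<forall>j\<in>e-{1}. x j ^ (k - 1) - x 1 * (\<Prod>s\<in>e - {1} - {j}. x s) = \<mu> * x j ^ (k - 1))"
  show "eqs x \<mu>" unfolding eqs_def
  proof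
    fix i assume i: "i \<in> {1..n}"
    show "laplacian_apply k E x i = \<mu> * x i ^ (k - 1)"
    proof (cases "i = 1")
      case True then show ?thesis using a lap1 by simp
    next
      case False
      then obtain e where "e \<in> E" "i \<in> e" using cover i by blast
      then show ?thesis using a lapj[OF False, of e x] False by auto
    qed
  qed
qed

lemma hom:
  assumes "\<forall>j\<in>{1..n}. x j = c * y j" "i \<in> {1..n}"
  shows "laplacian_apply k E x i = c ^ (k - 1) * laplacian_apply k E y i"
proof -
  have p: "(\<Prod>s\<in>e - {i}. x s) = c ^ (k - 1) * (\<Prod>s\<in>e - {i}. y s)" if "e \<in> E" "i \<in> e" for e
  proof -
    have "(\<Prod>s\<in>e - {i}. x s) = (\<Prod>s\<in>e - {i}. c * y s)"
      by (rule prod.cong) (use assms(1) edge[OF that(1)] in auto)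
    also have "\<dots> = c ^ card (e - {i}) * (\<Prod>s\<in>e - {i}. y s)"
      by (simp add: prod.distrib)
    also have "card (e - {i}) = k - 1" using that edge fin_e by (simp add: card_Diff_singleton)
    finally show ?thesis .
  qed
  have "(\<Sum>e\<in>{e\<in>E. i \<in> e}. \<Prod>s\<in>e - {i}. x s) = (\<Sum>e\<in>{e\<in>E. i \<in> e}. c ^ (k - 1) * (\<Prod>s\<in>e - {i}. y s))"
    by (rule sum.cong) (use p in auto)
  also have "\<dots> = c ^ (k - 1) * (\<Sum>e\<in>{e\<in>E. i \<in> e}. \<Prod>s\<in>e - {i}. y s)"
    by (simp add: sum_distrib_left)
  finally have s: "(\<Sum>e\<in>{e\<in>E. i \<in> e}. \<Prod>s\<in>e - {i}. x s) = c ^ (k - 1) * (\<Sum>e\<in>{e\<in>E. i \<in> e}. \<Prod>s\<in>e - {i}. y s)" .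
  have "x i ^ (k - 1) = c ^ (k - 1) * y i ^ (k - 1)" using assms by (simp add: power_mult_distrib)
  then show ?thesis unfolding laplacian_apply_def s by (simp add: algebra_simps)
qed

lemma eqs_scale:
  assumes "c \<noteq> 0" "\<forall>j\<in>{1..n}. x j = c * y j"
  shows "eqs x \<mu> \<longleftrightarrow> eqs y \<mu>"
proof -
  have "laplacian_apply k E x i = \<mu> * x i ^ (k - 1) \<longleftrightarrow> laplacian_apply k E y i = \<mu> * y i ^ (k - 1)"
    if "i \<in> {1..n}" for i
  proof -
    have "x i ^ (k - 1) = c ^ (k - 1) * y i ^ (k - 1)" using assms that by (simp add: power_mult_distrib)
    moreover have "c ^ (k - 1) \<noteq> 0" using assms by simp
    ultimately show ?thesis using hom[OF assms(2) that] by auto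
  qed
  then show ?thesis unfolding eqs_def by auto
qed

lemma dich:
  assumes "eqs y \<mu>" "y 1 = 1 - \<mu>" "\<mu> \<noteq> 1" "e \<in> E"
  shows "((\<forall>j\<in>e-{1}. y j = 0) \<and> (\<Prod>s\<in>e-{1}. y s) = 0) \<or>
         ((\<forall>j\<in>e-{1}. y j = 1 \<or> y j = -1) \<and> (\<Prod>s\<in>e-{1}. y s) = 1)"
proof -
  define A where "A = e - {1}"
  define P where "P = (\<Prod>s\<in>A. y s)"
  have finA: "finite A" using fin_e[OF assms(4)] A_def by simp
  have cA: "card A = k - 1" using card_A[OF assms(4)] A_def by simp
  have yk: "y j ^ k = P" if "j \<in> A" for j
  proof -
    have "y j ^ (k - 1) - (1 - \<mu>) * (\<Prod>s\<in>A - {j}. y s) = \<mu> * y j ^ (k - 1)"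
      using assms(1,2,4) that unfolding eqs_iff A_def by auto
    then have "(1 - \<mu>) * y j ^ (k - 1) = (1 - \<mu>) * (\<Prod>s\<in>A - {j}. y s)" by (simp add: algebra_simps)
    then have q: "y j ^ (k - 1) = (\<Prod>s\<in>A - {j}. y s)" using assms(3) by simp
    have "P = y j * (\<Prod>s\<in>A - {j}. y s)" unfolding P_def using finA that by (simp add: prod.remove)
    also have "\<dots> = y j * y j ^ (k - 1)" using q by simp
    also have "\<dots> = y j ^ Suc (k - 1)" by simp
    also have "Suc (k - 1) = k" using k4 by simp
    finally show ?thesis by simp
  qed
  have "P ^ k = (\<Prod>s\<in>A. y s ^ k)" unfolding P_def by (simp add: prod_power_distrib)
  also have "\<dots> = (\<Prod>s\<in>A. P)" by (rule prod.cong) (use yk in auto)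
  also have "\<dots> = P ^ (k - 1)" using cA by simp
  finally have "P ^ k = P ^ (k - 1)" .
  moreover have "P ^ k = P ^ (k - 1) * P"
  proof -
    have "Suc (k - 1) = k" using k4 by simp
    then show ?thesis by (metis power_Suc2)
  qed
  ultimately have "P ^ (k - 1) * (P - 1) = 0" by (simp add: algebra_simps)
  then have "P = 0 \<or> P = 1" by auto
  then show ?thesis
  proof
    assume "P = 0"
    then have "\<forall>j\<in>A. y j = 0" using yk by simp
    then show ?thesis using \<open>P = 0\<close> unfolding A_def P_def by simp
  next
    assume "P = 1"
    then have "\<forall>j\<in>A. y j = 1 \<or> y j = -1" using yk pow_eq1_real k4 by fastforce
    then show ?thesis using \<open>P = 1\<close> unfolding A_def P_def by simp
  qed
qed

lemma forward:
  assumes "\<mu> \<noteq> 1" "H_eigenvector k n E \<mu> x"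
  shows "\<exists>c y S. c \<noteq> 0 \<and> (\<forall>j\<in>{1..n}. x j = c * y j) \<and> S \<subseteq> E \<and>
           f_poly k d (card S) \<mu> = 0 \<and> star_vector n E (card S) \<mu> y"
proof -
  have ex: "eqs x \<mu>" and nz: "\<exists>i\<in>{1..n}. x i \<noteq> 0"
    using assms(2) unfolding H_eigenvector_def eqs_def by blast+
  have x1: "x 1 \<noteq> 0"
  proof
    assume x10: "x 1 = 0"
    have "x i = 0" if iin: "i \<in> {1..n}" for i
    proof (cases "i = 1")
      case True then show ?thesis using x10 by simp
    next
      case False
      obtain e where e: "e \<in> E" "i \<in> e" using cover iin by blast
      have ie: "i \<in> e - {1}" using e False by blast
      have "x i ^ (k - 1) - x 1 * (\<Prod>s\<in>e - {1} - {i}. x s) = \<mu> * x i ^ (k - 1)"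
        using ex e(1) ie unfolding eqs_iff by blast
      then have "(1 - \<mu>) * x i ^ (k - 1) = 0" using x10 by (simp add: algebra_simps)
      then show ?thesis using assms(1) by simp
    qed
    then show False using nz by blast
  qed
  define c where "c = x 1 / (1 - \<mu>)"
  have c0: "c \<noteq> 0" using x1 assms(1) c_def by simp
  define y where "y = (\<lambda>j. x j / c)"
  have xy: "\<forall>j\<in>{1..n}. x j = c * y j" using c0 y_def by simp
  have ey: "eqs y \<mu>" using eqs_scale[OF c0 xy] ex by simp
  have y1: "y 1 = 1 - \<mu>" using y_def c_def x1 assms(1) by simp
  define S where "S = {e\<in>E. (\<Prod>s\<in>e-{1}. y s) = 1}"
  have SE: "S \<subseteq> E" using S_def by auto
  have finS: "finite S" using finite_subset[OF SE finE] .
  have D0: "\<forall>j\<in>e-{1}. y j = 0" and D0': "(\<Prod>s\<in>e-{1}. y s) = 0"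
    if "e \<in> E" "(\<Prod>s\<in>e-{1}. y s) \<noteq> 1" for e
    using dich[OF ey y1 assms(1) that(1)] that(2) by blast+
  have D1: "\<forall>j\<in>e-{1}. y j = 1 \<or> y j = -1"
    if "e \<in> E" "(\<Prod>s\<in>e-{1}. y s) = 1" for e
    using dich[OF ey y1 assms(1) that(1)] that(2) by (metis zero_neq_one)
  have sum: "(\<Sum>e\<in>E. \<Prod>s\<in>e - {1}. y s) = real (card S)"
  proof -
    have "(\<Sum>e\<in>E. \<Prod>s\<in>e - {1}. y s) = (\<Sum>e\<in>S. \<Prod>s\<in>e - {1}. y s) + (\<Sum>e\<in>E - S. \<Prod>s\<in>e - {1}. y s)"
      using sum.subset_diff[OF SE finE] by (simp add: add.commute)
    also have "(\<Sum>e\<in>S. \<Prod>s\<in>e - {1}. y s) = (\<Sum>e\<in>S. 1)" by (rule sum.cong) (auto simp: S_def)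
    also have "(\<Sum>e\<in>E - S. \<Prod>s\<in>e - {1}. y s) = (\<Sum>e\<in>E - S. 0)"
    proof (rule sum.cong)
      fix e assume "e \<in> E - S"
      then show "(\<Prod>s\<in>e - {1}. y s) = 0" using D0' S_def by blast
    qed simp
    finally show ?thesis by simp
  qed
  have h: "real d * y 1 ^ (k - 1) - (\<Sum>e\<in>E. \<Prod>s\<in>e - {1}. y s) = \<mu> * y 1 ^ (k - 1)"
    using ey unfolding eqs_iff by blast
  then have "real d * (1 - \<mu>) ^ (k - 1) - real (card S) = \<mu> * (1 - \<mu>) ^ (k - 1)"
    using sum y1 by simp
  then have f: "f_poly k d (card S) \<mu> = 0"
    unfolding f_poly_def left_diff_distrib by linarith
  have sv: "star_vector n E (card S) \<mu> y"
    unfolding star_vector_def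
  proof (intro conjI exI[of _ S])
    show "y 1 = 1 - \<mu>" by (rule y1)
    show "S \<subseteq> E" by (rule SE)
    show "card S = card S" ..
    show "\<forall>j\<in>\<Union>S - {1}. y j = 1 \<or> y j = -1"
    proof
      fix j assume "j \<in> \<Union>S - {1}"
      then obtain e where "e \<in> S" "j \<in> e - {1}" by auto
      then show "y j = 1 \<or> y j = -1" using D1[of e] S_def by blast
    qed
    show "\<forall>e\<in>S. even (card {j\<in>e - {1}. y j = -1})"
    proof
      fix e assume eS: "e \<in> S"
      then have eE: "e \<in> E" using SE by auto
      have p1: "(\<Prod>s\<in>e-{1}. y s) = 1" using eS S_def by blast
      have pm: "\<forall>j\<in>e-{1}. y j = 1 \<or> y j = -1" using D1[OF eE p1] .
      have "(-1::real) ^ card {j\<in>e - {1}. y j = -1} = 1"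
        using prod_pm1[OF _ pm] fin_e[OF eE] p1 by simp
      show "even (card {j\<in>e - {1}. y j = -1})"
      proof (rule ccontr)
        assume "odd (card {j\<in>e - {1}. y j = -1})"
        then have "(-1::real) ^ card {j\<in>e - {1}. y j = -1} = -1" by (rule neg_one_odd_power)
        with \<open>(-1::real) ^ card {j\<in>e - {1}. y j = -1} = 1\<close> show False by simp
      qed
    qed
    show "\<forall>j\<in>{1..n} - \<Union>S. j \<noteq> 1 \<longrightarrow> y j = 0"
    proof (intro ballI impI)
      fix j assume j: "j \<in> {1..n} - \<Union>S" "j \<noteq> 1"
      then obtain e where e: "e \<in> E" "j \<in> e" using cover by blast
      then have "e \<notin> S" using j by auto
      then have "(\<Prod>s\<in>e-{1}. y s) \<noteq> 1" using e S_def by auto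
      then show "y j = 0" using D0[OF e(1)] e j by blast
    qed
  qed
  show ?thesis using c0 xy SE f sv by blast
qed

lemma backward:
  assumes "\<mu> \<noteq> 1" "f_poly k d r \<mu> = 0" "star_vector n E r \<mu> y"
  shows "eqs y \<mu>"
proof -
  obtain S where y1: "y 1 = 1 - \<mu>" and SE: "S \<subseteq> E" and cS: "card S = r"
    and pm: "\<forall>j\<in>\<Union>S - {1}. y j = 1 \<or> y j = -1"
    and par: "\<forall>e\<in>S. even (card {j\<in>e - {1}. y j = -1})"
    and z: "\<forall>j\<in>{1..n} - \<Union>S. j \<noteq> 1 \<longrightarrow> y j = 0"
    using assms(3) unfolding star_vector_def by blast
  have zE: "y j = 0" if "e \<in> E" "e \<notin> S" "j \<in> e - {1}" for e j
  proof -
    have "j \<notin> \<Union>S"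
    proof
      assume "j \<in> \<Union>S"
      then obtain e' where "e' \<in> S" "j \<in> e'" by auto
      then have "e \<inter> e' = {1}" using disj[of e e'] that SE by auto
      then show False using that \<open>j \<in> e'\<close> by auto
    qed
    moreover have "j \<in> {1..n}" using edge[OF that(1)] that(3) by blast
    ultimately show ?thesis using z that by auto
  qed
  have P1: "(\<Prod>s\<in>e-{1}. y s) = 1" if "e \<in> S" for e
  proof -
    have eE: "e \<in> E" using that SE by auto
    have pe: "\<forall>j\<in>e-{1}. y j = 1 \<or> y j = -1" using pm that by blast
    have fA: "finite (e - {1})" using fin_e[OF eE] by blast
    have "(\<Prod>s\<in>e-{1}. y s) = (-1) ^ card {j\<in>e - {1}. y j = -1}" by (rule prod_pm1[OF fA pe])
    also have "\<dots> = 1" using par that by simp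
    finally show ?thesis .
  qed
  have P0: "(\<Prod>s\<in>B. y s) = 0" if h: "e \<in> E" "e \<notin> S" "B \<subseteq> e - {1}" "B \<noteq> {}" for e B
  proof -
    obtain j where "j \<in> B" using h by auto
    moreover have "finite B" using fin_e[OF that(1)] that(3) finite_subset by blast
    ultimately show ?thesis
    proof (intro prod_zero)
      show "\<exists>a\<in>B. y a = 0" using zE[OF h(1,2)] h(3) \<open>j \<in> B\<close> by blast
    qed
  qed
  have sum: "(\<Sum>e\<in>E. \<Prod>s\<in>e - {1}. y s) = real r"
  proof -
    have "(\<Sum>e\<in>E. \<Prod>s\<in>e - {1}. y s) = (\<Sum>e\<in>S. \<Prod>s\<in>e - {1}. y s) + (\<Sum>e\<in>E - S. \<Prod>s\<in>e - {1}. y s)"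
      using sum.subset_diff[OF SE finE] by (simp add: add.commute)
    also have "(\<Sum>e\<in>S. \<Prod>s\<in>e - {1}. y s) = (\<Sum>e\<in>S. 1)" by (rule sum.cong) (use P1 in auto)
    also have "(\<Sum>e\<in>E - S. \<Prod>s\<in>e - {1}. y s) = (\<Sum>e\<in>E - S. 0)"
    proof (rule sum.cong)
      fix e assume "e \<in> E - S"
      moreover have "e - {1} \<noteq> {}"
      proof
        assume "e - {1} = {}"
        then have "card (e - {1}) = 0" by (metis card.empty)
        with card_A[of e] k4 \<open>e \<in> E - S\<close> show False by simp
      qed
      ultimately show "(\<Prod>s\<in>e - {1}. y s) = 0" using P0 by auto
    qed simp
    finally show ?thesis using cS by simp
  qed
  show ?thesis unfolding eqs_iff
  proof (intro conjI ballI)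
    show "real d * y 1 ^ (k - 1) - (\<Sum>e\<in>E. \<Prod>s\<in>e - {1}. y s) = \<mu> * y 1 ^ (k - 1)"
      using sum assms(2) unfolding f_poly_def y1 by (simp add: algebra_simps)
  next
    fix e j assume eE: "e \<in> E" and j: "j \<in> e - {1}"
    have finA: "finite (e - {1})" using fin_e[OF eE] by simp
    show "y j ^ (k - 1) - y 1 * (\<Prod>s\<in>e - {1} - {j}. y s) = \<mu> * y j ^ (k - 1)"
    proof (cases "e \<in> S")
      case True
      have yj: "y j = 1 \<or> y j = -1" using pm True j by auto
      have odd: "odd (k - 1)" using ev k4 by simp
      have pk: "y j ^ (k - 1) = y j" using yj
      proof
        assume "y j = -1" then show ?thesis using neg_one_odd_power[OF odd] by simp
      qed simp
      have "1 = y j * (\<Prod>s\<in>e - {1} - {j}. y s)" using P1[OF True] finA j by (simp add: prod.remove)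
      then have q: "(\<Prod>s\<in>e - {1} - {j}. y s) = y j" using yj by (metis mult_minus1 mult_1 minus_equation_iff)
      show ?thesis unfolding pk q y1 by (simp add: algebra_simps)
    next
      case False
      have "y j = 0" using zE[OF eE False j] .
      moreover have "card (e - {1} - {j}) = k - 2" using card_A[OF eE] j finA by (simp add: card_Diff_singleton)
      then have "e - {1} - {j} \<noteq> {}"
      proof -
        assume c2: "card (e - {1} - {j}) = k - 2"
        show ?thesis
        proof
          assume "e - {1} - {j} = {}"
          then have "card (e - {1} - {j}) = 0" by (metis card.empty)
          with c2 k4 show False by linarith
        qed
      qed
      then have "(\<Prod>s\<in>e - {1} - {j}. y s) = 0" using P0[OF eE False] by auto
      moreover have "k - 1 > 0" using k4 by simp
      ultimately show ?thesis by simp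
    qed
  qed
qed

end

theorem proposition5p2:
  fixes k d n :: nat and E :: "nat set set"
  assumes "even k" and "k \<ge> 4" and "d \<ge> 2"
    and "hyperstar k d n E"
  shows "(\<forall>\<mu>::real. \<mu> \<noteq> 1 \<longrightarrow>
            (H_eigenvalue k n E \<mu> \<longleftrightarrow> (\<exists>r\<in>{0..d}. f_poly k d r \<mu> = 0)))
       \<and> (\<forall>(\<mu>::real) r. \<mu> \<noteq> 1 \<longrightarrow> r \<le> d \<longrightarrow> f_poly k d r \<mu> = 0 \<longrightarrow>
            (\<forall>x. H_eigenvector k n E \<mu> x \<longleftrightarrow>
                 (\<exists>c y. c \<noteq> 0 \<and> star_vector n E r \<mu> y \<and> (\<forall>j\<in>{1..n}. x j = c * y j))))"
proof -
  interpret hs k d n E using assms by unfold_locales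
  have bk: "H_eigenvector k n E \<mu> x"
    if hh: "\<mu> \<noteq> 1" "f_poly k d r \<mu> = 0" "c \<noteq> 0" "star_vector n E r \<mu> y" "\<forall>j\<in>{1..n}. x j = c * y j"
    for \<mu> r c y x
  proof -
    have "eqs y \<mu>" using backward[OF hh(1,2,4)] .
    then have ex: "eqs x \<mu>" using eqs_scale[OF hh(3,5)] by simp
    have y1: "y 1 = 1 - \<mu>" using hh(4) unfolding star_vector_def by blast
    have "x 1 = c * (1 - \<mu>)" using hh(5) one_in y1 by simp
    then have "x 1 \<noteq> 0" using hh(1,3) by simp
    then show ?thesis using ex one_in unfolding H_eigenvector_def eqs_def by blast
  qed
  show ?thesis
  proof (intro conjI allI impI iffI)
    fix \<mu> :: real assume m: "\<mu> \<noteq> 1" "H_eigenvalue k n E \<mu>"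
    then obtain x where hx: "H_eigenvector k n E \<mu> x" unfolding H_eigenvalue_def by blast
    obtain S where S: "S \<subseteq> E" "f_poly k d (card S) \<mu> = 0" using forward[OF m(1) hx] by blast
    have "card S \<le> d" using card_mono[OF finE S(1)] cardE by simp
    then show "\<exists>r\<in>{0..d}. f_poly k d r \<mu> = 0" using S(2) by auto
  next
    fix \<mu> :: real assume m: "\<mu> \<noteq> 1" "\<exists>r\<in>{0..d}. f_poly k d r \<mu> = 0"
    then obtain r where r: "r \<le> d" "f_poly k d r \<mu> = 0" by auto
    have "r \<le> card E" using r(1) cardE by simp
    then obtain S where S: "S \<subseteq> E" "card S = r" by (meson obtain_subset_with_card_n)
    define y where "y = (\<lambda>j. if j = 1 then 1 - \<mu> else if j \<in> \<Union>S then 1 else (0::real))"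
    have "star_vector n E r \<mu> y" unfolding star_vector_def
    proof (intro conjI exI[of _ S])
      show "y 1 = 1 - \<mu>" by (simp add: y_def)
      show "S \<subseteq> E" "card S = r" using S by auto
      show "\<forall>j\<in>\<Union>S - {1}. y j = 1 \<or> y j = -1" by (simp add: y_def)
      show "\<forall>e\<in>S. even (card {j\<in>e - {1}. y j = -1})"
      proof
        fix e assume "e \<in> S"
        have "{j\<in>e - {1}. y j = -1} = {}" by (auto simp: y_def)
        then have "card {j\<in>e - {1}. y j = -1} = 0" by (metis card.empty)
        then show "even (card {j\<in>e - {1}. y j = -1})" by (metis dvd_0_right)
      qed
      show "\<forall>j\<in>{1..n} - \<Union>S. j \<noteq> 1 \<longrightarrow> y j = 0" by (simp add: y_def)
    qed
    then have "H_eigenvector k n E \<mu> y" using bk[OF m(1) r(2), of 1 y y] by simp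
    then show "H_eigenvalue k n E \<mu>" unfolding H_eigenvalue_def by blast
  next
    fix \<mu> :: real and r x
    assume m: "\<mu> \<noteq> 1" "r \<le> d" "f_poly k d r \<mu> = 0" "H_eigenvector k n E \<mu> x"
    obtain c y S where c: "c \<noteq> 0" "\<forall>j\<in>{1..n}. x j = c * y j" "S \<subseteq> E"
      "f_poly k d (card S) \<mu> = 0" "star_vector n E (card S) \<mu> y"
      using forward[OF m(1) m(4)] by blast
    have "real r = real (card S)" using c(4) m(3) unfolding f_poly_def by linarith
    then have rS: "r = card S" by (simp only: of_nat_eq_iff)
    show "\<exists>c y. c \<noteq> 0 \<and> star_vector n E r \<mu> y \<and> (\<forall>j\<in>{1..n}. x j = c * y j)"
      unfolding rS using c(1,2,5) by blast
  next
    fix \<mu> :: real and r x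
    assume m: "\<mu> \<noteq> 1" "r \<le> d" "f_poly k d r \<mu> = 0"
      "\<exists>c y. c \<noteq> 0 \<and> star_vector n E r \<mu> y \<and> (\<forall>j\<in>{1..n}. x j = c * y j)"
    then obtain c y where "c \<noteq> 0" "star_vector n E r \<mu> y" "\<forall>j\<in>{1..n}. x j = c * y j" by blast
    then show "H_eigenvector k n E \<mu> x" using bk[OF m(1) m(3)] by blast
  qed
qed

end
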